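(* Let $1\le p<\infty$, let $(e_j)_{j\in\mathbb{Z}}$ be the standard basis of $\ell^p(\mathbb{Z})$, $\mathscr{N}_k=\bigvee\{e_j:j\le k\}$ for $k\in\mathbb{Z}$, and $\mathfrak{N}=\{\mathscr{N}_k:k\in\mathbb{Z}\}\cup\{\{0\},\ell^p(\mathbb{Z})\}$. Let $W$ be the bilateral shift, $We_k=e_{k+1}$ ($k\in\mathbb{Z}$), and $\mathcal{O}(\mathfrak{N})=\{W^k:k\in\mathbb{Z}\}$. Then $\mathrm{Col}(\mathfrak{N})=\mathrm{Grp}(\mathrm{Alg}(\mathfrak{N}))\rtimes\mathcal{O}(\mathfrak{N})$.
   Context: $\bigvee$ denotes closed linear span. $\mathrm{Alg}(\mathfrak{F})$ is the set of bounded operators leaving every subspace of $\mathfrak{F}$ invariant; $\mathrm{Grp}(\mathcal{A})$ is the group of invertible $S\in\mathcal{A}$ with $S^{-1}\in\mathcal{A}$. $\mathrm{Col}(\mathfrak{F})$ is the group of invertible bounded $S$ such that for every closed subspace $\mathscr{M}$: $\mathscr{M}\in\mathfrak{F}$ iff $S\mathscr{M}\in\mathfrak{F}$. For a subgroup $\mathcal{O}\subseteq\mathrm{Col}(\mathfrak{F})$, $\mathrm{Col}(\mathfrak{F})=\mathrm{Grp}(\mathrm{Alg}(\mathfrak{F}))\rtimes\mathcal{O}$ means $\mathrm{Col}(\mathfrak{F})=\{AT:A\in\mathrm{Grp}(\mathrm{Alg}(\mathfrak{F})),T\in\mathcal{O}\}$ and $\mathrm{Grp}(\mathrm{Alg}(\mathfrak{F}))\cap\mathcal{O}=\{I\}$.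 *)

theory Defs
  imports "HOL-Analysis.Analysis"
begin

type_synonym seq = "int \<Rightarrow> complex"

definition lp :: "real \<Rightarrow> seq set" where
  "lp p = {x. (\<lambda>j. norm (x j) powr p) summable_on UNIV}"

definition lp_norm :: "real \<Rightarrow> seq \<Rightarrow> real" where
  "lp_norm p x = (infsum (\<lambda>j. norm (x j) powr p) UNIV) powr (1 / p)"

definition zero_seq :: seq where "zero_seq = (\<lambda>j. 0)"

definition std_basis :: "int \<Rightarrow> seq" where
  "std_basis k = (\<lambda>j. if j = k then 1 else 0)"

definition closed_subspace :: "real \<Rightarrow> seq set \<Rightarrow> bool" where
  "closed_subspace p M \<longleftrightarrow> M \<subseteq> lp p \<and> zero_seq \<in> M
     \<and> (\<forall>x\<in>M. \<forall>y\<in>M. (\<lambda>j. x j + y j) \<in> M)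
     \<and> (\<forall>c::complex. \<forall>x\<in>M. (\<lambda>j. c * x j) \<in> M)
     \<and> (\<forall>u x. (\<forall>n. u n \<in> M) \<and> x \<in> lp p
            \<and> (\<lambda>n. lp_norm p (\<lambda>j. u n j - x j)) \<longlonglongrightarrow> 0 \<longrightarrow> x \<in> M)"

definition closed_span :: "real \<Rightarrow> seq set \<Rightarrow> seq set" where
  "closed_span p S = \<Inter>{M. closed_subspace p M \<and> S \<subseteq> M}"

text \<open>Bounded operators on ell^p(Z). They are represented extensionally:
 as maps on all sequences that vanish outside ell^p(Z), so that two operators
 are equal iff they agree on ell^p(Z).\<close>
definition bounded_op :: "real \<Rightarrow> (seq \<Rightarrow> seq) \<Rightarrow> bool" where
  "bounded_op p T \<longleftrightarrow>
     (\<forall>x\<in>lp p. T x \<in> lp p)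
   \<and> (\<forall>x. x \<notin> lp p \<longrightarrow> T x = zero_seq)
   \<and> (\<forall>x\<in>lp p. \<forall>y\<in>lp p. T (\<lambda>j. x j + y j) = (\<lambda>j. T x j + T y j))
   \<and> (\<forall>c::complex. \<forall>x\<in>lp p. T (\<lambda>j. c * x j) = (\<lambda>j. c * T x j))
   \<and> (\<exists>C. \<forall>x\<in>lp p. lp_norm p (T x) \<le> C * lp_norm p x)"

definition lp_id :: "real \<Rightarrow> seq \<Rightarrow> seq" where
  "lp_id p x = (if x \<in> lp p then x else zero_seq)"

definition invertible_op :: "real \<Rightarrow> (seq \<Rightarrow> seq) \<Rightarrow> bool" where
  "invertible_op p S \<longleftrightarrow> bounded_op p S \<and>
     (\<exists>R. bounded_op p R \<and> R \<circ> S = lp_id p \<and> S \<circ> R = lp_id p)"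

definition Alg :: "real \<Rightarrow> seq set set \<Rightarrow> (seq \<Rightarrow> seq) set" where
  "Alg p F = {T. bounded_op p T \<and> (\<forall>M\<in>F. T ` M \<subseteq> M)}"

definition Grp :: "real \<Rightarrow> (seq \<Rightarrow> seq) set \<Rightarrow> (seq \<Rightarrow> seq) set" where
  "Grp p A = {S. S \<in> A \<and> (\<exists>R\<in>A. bounded_op p R \<and> R \<circ> S = lp_id p \<and> S \<circ> R = lp_id p)}"

definition Col :: "real \<Rightarrow> seq set set \<Rightarrow> (seq \<Rightarrow> seq) set" where
  "Col p F = {S. invertible_op p S \<and>
     (\<forall>M. closed_subspace p M \<longrightarrow> (M \<in> F \<longleftrightarrow> S ` M \<in> F))}"

definition nest_N :: "real \<Rightarrow> int \<Rightarrow> seq set" where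
  "nest_N p k = closed_span p {std_basis j | j. j \<le> k}"

definition nestN :: "real \<Rightarrow> seq set set" where
  "nestN p = range (nest_N p) \<union> {{zero_seq}, lp p}"

definition shift_pow :: "real \<Rightarrow> int \<Rightarrow> seq \<Rightarrow> seq" where
  "shift_pow p k x = (if x \<in> lp p then (\<lambda>j. x (j - k)) else zero_seq)"

definition Orb :: "real \<Rightarrow> (seq \<Rightarrow> seq) set" where
  "Orb p = range (shift_pow p)"

end

theory Submission
  imports Defs
begin

lemma zero_lp[simp]: "zero_seq \<in> lp p"
  by (simp add: lp_def zero_seq_def)

lemma powr_add_bound:
  fixes a b :: complex assumes p: "0 < p"
  shows "norm (a + b) powr p \<le> 2 powr p * (norm a powr p + norm b powr p)"
proof -
  have "norm (a+b) \<le> 2 * max (norm a) (norm b)"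
    using norm_triangle_ineq[of a b] by linarith
  hence "norm (a+b) powr p \<le> (2 * max (norm a) (norm b)) powr p"
    by (intro powr_mono2) (use p in auto)
  also have "\<dots> = 2 powr p * max (norm a) (norm b) powr p"
    by (simp add: powr_mult)
  also have "max (norm a) (norm b) powr p \<le> norm a powr p + norm b powr p"
    by (cases "norm a \<le> norm b") (auto simp: max_def)
  hence "2 powr p * max (norm a) (norm b) powr p \<le> 2 powr p * (norm a powr p + norm b powr p)"
    by (intro mult_left_mono) auto
  finally show ?thesis .
qed

lemma lp_add:
  assumes p: "0 < p" and x: "x \<in> lp p" and y: "y \<in> lp p"
  shows "(\<lambda>j. x j + y j) \<in> lp p"
proof -
  have "(\<lambda>j. 2 powr p * (norm (x j) powr p + norm (y j) powr p)) summable_on UNIV"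
    using x y unfolding lp_def by (intro summable_on_cmult_right summable_on_add) auto
  then show ?thesis unfolding lp_def
    by (intro CollectI summable_on_comparison_test[OF _ powr_add_bound[OF p]]) auto
qed

lemma lp_scal:
  assumes x: "x \<in> lp p"
  shows "(\<lambda>j. c * x j) \<in> lp p"
proof -
  have "(\<lambda>j. norm c powr p * norm (x j) powr p) summable_on UNIV"
    using x unfolding lp_def by (intro summable_on_cmult_right) auto
  then show ?thesis unfolding lp_def by (simp add: norm_mult powr_mult)
qed

lemma lp_diff:
  assumes p: "0 < p" and x: "x \<in> lp p" and y: "y \<in> lp p"
  shows "(\<lambda>j. x j - y j) \<in> lp p"
proof -
  have "(\<lambda>j. x j + (-1) * y j) \<in> lp p"
    using lp_add[OF p x lp_scal[OF y, of "-1"]] by simp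
  thus ?thesis by simp
qed

lemma std_basis_lp[simp]: "std_basis k \<in> lp p"
proof -
  have "(\<lambda>j. norm (std_basis k j) powr p) summable_on {k}" by simp
  hence "(\<lambda>j. norm (std_basis k j) powr p) summable_on UNIV"
    by (rule summable_on_cong_neutral[THEN iffD1, rotated -1]) (auto simp: std_basis_def)
  thus ?thesis by (simp add: lp_def)
qed

lemma lp_norm_nonneg: "0 \<le> lp_norm p x"
  by (simp add: lp_norm_def)

lemma norm_le_lp_norm:
  assumes p: "0 < p" and x: "x \<in> lp p"
  shows "norm (x j) \<le> lp_norm p x"
proof -
  let ?f = "\<lambda>j. norm (x j) powr p"
  have "infsum ?f {j} \<le> infsum ?f UNIV"
    using x unfolding lp_def by (intro infsum_mono_neutral) auto
  hence le: "?f j \<le> infsum ?f UNIV" by simp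
  have "norm (x j) = (?f j) powr (1/p)" using p by (simp add: powr_powr)
  also have "\<dots> \<le> infsum ?f UNIV powr (1/p)"
    using p le by (intro powr_mono2) auto
  finally show ?thesis by (simp add: lp_norm_def)
qed

lemma bounded_op_lp: "bounded_op p T \<Longrightarrow> T x \<in> lp p"
  unfolding bounded_op_def by (cases "x \<in> lp p") auto

lemma bounded_op_zero: "bounded_op p T \<Longrightarrow> T zero_seq = zero_seq"
proof -
  assume T: "bounded_op p T"
  have "T (\<lambda>j. 0 * zero_seq j) = (\<lambda>j. 0 * T zero_seq j)"
    using T zero_lp unfolding bounded_op_def by blast
  thus ?thesis by (simp add: zero_seq_def)
qed

lemma bounded_op_add: "bounded_op p T \<Longrightarrow> x \<in> lp p \<Longrightarrow> y \<in> lp p \<Longrightarrow> T (\<lambda>j. x j + y j) = (\<lambda>j. T x j + T y j)"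
  unfolding bounded_op_def by blast

lemma bounded_op_scal: "bounded_op p T \<Longrightarrow> x \<in> lp p \<Longrightarrow> T (\<lambda>j. c * x j) = (\<lambda>j. c * T x j)"
  unfolding bounded_op_def by blast

lemma bounded_op_diff:
  assumes p: "0 < p" and T: "bounded_op p T" and x: "x \<in> lp p" and y: "y \<in> lp p"
  shows "T (\<lambda>j. x j - y j) = (\<lambda>j. T x j - T y j)"
proof -
  have "T (\<lambda>j. x j + (\<lambda>j. (-1) * y j) j) = (\<lambda>j. T x j + T (\<lambda>j. (-1) * y j) j)"
    by (rule bounded_op_add[OF T x lp_scal[OF y]])
  also have "T (\<lambda>j. (-1) * y j) = (\<lambda>j. (-1) * T y j)" by (rule bounded_op_scal[OF T y])
  finally show ?thesis by simp
qed

lemma bounded_op_bound: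
  assumes "bounded_op p T" obtains C where "C \<ge> 0" "\<And>x. x \<in> lp p \<Longrightarrow> lp_norm p (T x) \<le> C * lp_norm p x"
proof -
  obtain C where C: "\<And>x. x \<in> lp p \<Longrightarrow> lp_norm p (T x) \<le> C * lp_norm p x"
    using assms unfolding bounded_op_def by blast
  show ?thesis
  proof (rule that[of "max C 0"])
    fix x assume "x \<in> lp p"
    from C[OF this] show "lp_norm p (T x) \<le> max C 0 * lp_norm p x"
      by (rule order_trans[OF _ mult_right_mono[OF max.cobounded1 lp_norm_nonneg]])
  qed simp
qed

lemma bounded_op_comp:
  assumes T: "bounded_op p T" and U: "bounded_op p U"
  shows "bounded_op p (T \<circ> U)"
proof -
  obtain C where C: "C \<ge> 0" "\<And>x. x \<in> lp p \<Longrightarrow> lp_norm p (T x) \<le> C * lp_norm p x"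
    using bounded_op_bound[OF T] by blast
  obtain D where D: "D \<ge> 0" "\<And>x. x \<in> lp p \<Longrightarrow> lp_norm p (U x) \<le> D * lp_norm p x"
    using bounded_op_bound[OF U] by blast
  have "\<forall>x\<in>lp p. lp_norm p (T (U x)) \<le> (C * D) * lp_norm p x"
  proof
    fix x assume x: "x \<in> lp p"
    have "lp_norm p (T (U x)) \<le> C * lp_norm p (U x)" using C(2) bounded_op_lp[OF U] by blast
    also have "\<dots> \<le> C * (D * lp_norm p x)" using D(2)[OF x] C(1) by (rule mult_left_mono)
    finally show "lp_norm p (T (U x)) \<le> (C * D) * lp_norm p x" by simp
  qed
  moreover have "\<forall>x. x \<notin> lp p \<longrightarrow> T (U x) = zero_seq"
  proof (intro allI impI)
    fix x assume "x \<notin> lp p"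
    hence "U x = zero_seq" using U unfolding bounded_op_def by blast
    thus "T (U x) = zero_seq" using bounded_op_zero[OF T] by simp
  qed
  moreover have "\<forall>x\<in>lp p. \<forall>y\<in>lp p. T (U (\<lambda>j. x j + y j)) = (\<lambda>j. T (U x) j + T (U y) j)"
    using bounded_op_add[OF U] bounded_op_add[OF T] bounded_op_lp[OF U] by simp
  moreover have "\<forall>c. \<forall>x\<in>lp p. T (U (\<lambda>j. c * x j)) = (\<lambda>j. c * T (U x) j)"
    using bounded_op_scal[OF U] bounded_op_scal[OF T] bounded_op_lp[OF U] by simp
  ultimately show ?thesis
    using bounded_op_lp[OF T]
    unfolding bounded_op_def comp_apply by blast
qed

lemma lp_id_bounded: "0 < p \<Longrightarrow> bounded_op p (lp_id p)"
  unfolding bounded_op_def lp_id_def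
  by (auto simp: lp_add lp_scal intro!: exI[of _ 1])

lemma cs_lp: "0 < p \<Longrightarrow> closed_subspace p (lp p)"
  unfolding closed_subspace_def by (auto simp: lp_add lp_scal)

lemma cs_sub: "closed_subspace p M \<Longrightarrow> M \<subseteq> lp p"
  unfolding closed_subspace_def by blast

lemma cs_Inter:
  assumes "\<And>M. M \<in> F \<Longrightarrow> closed_subspace p M" "F \<noteq> {}"
  shows "closed_subspace p (\<Inter>F)"
proof -
  obtain M0 where "M0 \<in> F" using assms(2) by blast
  hence sub: "\<Inter>F \<subseteq> lp p" using assms(1) cs_sub by blast
  show ?thesis unfolding closed_subspace_def
  proof (intro conjI sub)
    show "zero_seq \<in> \<Inter>F" using assms(1) unfolding closed_subspace_def by blast
    show "\<forall>x\<in>\<Inter>F. \<forall>y\<in>\<Inter>F. (\<lambda>j. x j + y j) \<in> \<Inter>F"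
      using assms(1) unfolding closed_subspace_def by blast
    show "\<forall>c. \<forall>x\<in>\<Inter>F. (\<lambda>j. c * x j) \<in> \<Inter>F"
      using assms(1) unfolding closed_subspace_def by blast
    show "\<forall>u x. (\<forall>n. u n \<in> \<Inter>F) \<and> x \<in> lp p \<and> (\<lambda>n. lp_norm p (\<lambda>j. u n j - x j)) \<longlonglongrightarrow> 0 \<longrightarrow> x \<in> \<Inter>F"
    proof (intro allI impI)
      fix u x assume h: "(\<forall>n. u n \<in> \<Inter>F) \<and> x \<in> lp p \<and> (\<lambda>n. lp_norm p (\<lambda>j. u n j - x j)) \<longlonglongrightarrow> 0"
      show "x \<in> \<Inter>F"
      proof
        fix M assume M: "M \<in> F"
        have "\<forall>n. u n \<in> M" using h M by blast
        thus "x \<in> M" using assms(1)[OF M] h unfolding closed_subspace_def by blast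
      qed
    qed
  qed
qed

lemma span_cs:
  assumes p: "0 < p" and S: "S \<subseteq> lp p" shows "closed_subspace p (closed_span p S)"
  unfolding closed_span_def using S cs_lp[OF p] by (intro cs_Inter) auto

lemma span_sup: "S \<subseteq> closed_span p S"
  unfolding closed_span_def by blast

lemma span_least: "closed_subspace p M \<Longrightarrow> S \<subseteq> M \<Longrightarrow> closed_span p S \<subseteq> M"
  unfolding closed_span_def by blast

lemma cspan_mono: "S \<subseteq> S' \<Longrightarrow> closed_span p S \<subseteq> closed_span p S'"
  unfolding closed_span_def by blast

lemma preimage_cs:
  assumes p: "0 < p" and T: "bounded_op p T" and M: "closed_subspace p M"
  shows "closed_subspace p {x \<in> lp p. T x \<in> M}"
  unfolding closed_subspace_def
proof (intro conjI)
  show "{x \<in> lp p. T x \<in> M} \<subseteq> lp p" by blast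
  have Mz: "zero_seq \<in> M" and Ma: "\<And>x y. x \<in> M \<Longrightarrow> y \<in> M \<Longrightarrow> (\<lambda>j. x j + y j) \<in> M"
    and Ms: "\<And>c x. x \<in> M \<Longrightarrow> (\<lambda>j. c * x j) \<in> M"
    and Mc: "\<And>u x. (\<forall>n. u n \<in> M) \<Longrightarrow> x \<in> lp p \<Longrightarrow> (\<lambda>n. lp_norm p (\<lambda>j. u n j - x j)) \<longlonglongrightarrow> 0 \<Longrightarrow> x \<in> M"
    using M unfolding closed_subspace_def by blast+
  show "zero_seq \<in> {x \<in> lp p. T x \<in> M}"
    using bounded_op_zero[OF T] Mz by simp
  show "\<forall>x\<in>{x \<in> lp p. T x \<in> M}. \<forall>y\<in>{x \<in> lp p. T x \<in> M}. (\<lambda>j. x j + y j) \<in> {x \<in> lp p. T x \<in> M}"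
  proof (intro ballI)
    fix x y assume "x \<in> {x \<in> lp p. T x \<in> M}" "y \<in> {x \<in> lp p. T x \<in> M}"
    thus "(\<lambda>j. x j + y j) \<in> {x \<in> lp p. T x \<in> M}"
      using bounded_op_add[OF T, of x y] lp_add[OF p, of x y] Ma[of "T x" "T y"] by simp
  qed
  show "\<forall>c. \<forall>x\<in>{x \<in> lp p. T x \<in> M}. (\<lambda>j. c * x j) \<in> {x \<in> lp p. T x \<in> M}"
  proof (intro allI ballI)
    fix c x assume "x \<in> {x \<in> lp p. T x \<in> M}"
    thus "(\<lambda>j. c * x j) \<in> {x \<in> lp p. T x \<in> M}"
      using bounded_op_scal[OF T, of x c] lp_scal[of x p c] Ms[of "T x" c] by simp
  qed
  show "\<forall>u x. (\<forall>n. u n \<in> {x \<in> lp p. T x \<in> M}) \<and> x \<in> lp p \<and> (\<lambda>n. lp_norm p (\<lambda>j. u n j - x j)) \<longlonglongrightarrow> 0 \<longrightarrow> x \<in> {x \<in> lp p. T x \<in> M}"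
  proof (intro allI impI)
    fix u x assume h: "(\<forall>n. u n \<in> {x \<in> lp p. T x \<in> M}) \<and> x \<in> lp p \<and> (\<lambda>n. lp_norm p (\<lambda>j. u n j - x j)) \<longlonglongrightarrow> 0"
    hence u: "\<And>n. u n \<in> lp p" "\<And>n. T (u n) \<in> M" and x: "x \<in> lp p"
      and lim: "(\<lambda>n. lp_norm p (\<lambda>j. u n j - x j)) \<longlonglongrightarrow> 0" by auto
    obtain C where C: "C \<ge> 0" "\<And>x. x \<in> lp p \<Longrightarrow> lp_norm p (T x) \<le> C * lp_norm p x"
      using bounded_op_bound[OF T] by blast
    have eq: "(\<lambda>j. T (u n) j - T x j) = T (\<lambda>j. u n j - x j)" for n
      using bounded_op_diff[OF p T u(1) x] by simp
    have le: "lp_norm p (\<lambda>j. T (u n) j - T x j) \<le> C * lp_norm p (\<lambda>j. u n j - x j)" for n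
      unfolding eq by (rule C(2)[OF lp_diff[OF p u(1) x]])
    have "(\<lambda>n. C * lp_norm p (\<lambda>j. u n j - x j)) \<longlonglongrightarrow> C * 0"
      by (intro tendsto_mult tendsto_const lim)
    hence lim2: "(\<lambda>n. C * lp_norm p (\<lambda>j. u n j - x j)) \<longlonglongrightarrow> 0" by simp
    have "(\<lambda>n. lp_norm p (\<lambda>j. T (u n) j - T x j)) \<longlonglongrightarrow> 0"
      by (rule real_tendsto_sandwich[OF _ _ tendsto_const lim2])
         (simp_all add: le lp_norm_nonneg)
    hence "T x \<in> M" using u(2) bounded_op_lp[OF T] by (intro Mc) auto
    thus "x \<in> {x \<in> lp p. T x \<in> M}" using x by blast
  qed
qed

definition inv_pair :: "real \<Rightarrow> (seq \<Rightarrow> seq) \<Rightarrow> (seq \<Rightarrow> seq) \<Rightarrow> bool" where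
  "inv_pair p T R \<longleftrightarrow> bounded_op p T \<and> bounded_op p R \<and> R \<circ> T = lp_id p \<and> T \<circ> R = lp_id p"

lemma inv_pair_sym: "inv_pair p T R \<Longrightarrow> inv_pair p R T"
  unfolding inv_pair_def by blast

lemma inv_pair_app: "inv_pair p T R \<Longrightarrow> x \<in> lp p \<Longrightarrow> R (T x) = x"
  unfolding inv_pair_def lp_id_def by (metis comp_apply)

lemma inv_pair_img: "inv_pair p T R \<Longrightarrow> M \<subseteq> lp p \<Longrightarrow> R ` (T ` M) = M"
proof -
  assume a: "inv_pair p T R" "M \<subseteq> lp p"
  have "R ` (T ` M) = (\<lambda>x. R (T x)) ` M" by (simp add: image_image)
  also have "\<dots> = (\<lambda>x. x) ` M" using a(2) inv_pair_app[OF a(1)] by (intro image_cong) auto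
  also have "\<dots> = M" by simp
  finally show ?thesis .
qed

lemma img_span:
  assumes p: "0 < p" and TR: "inv_pair p T R" and S: "S \<subseteq> lp p"
  shows "T ` closed_span p S \<subseteq> closed_span p (T ` S)"
proof -
  have T: "bounded_op p T" using TR unfolding inv_pair_def by blast
  have TS: "T ` S \<subseteq> lp p" using bounded_op_lp[OF T] by blast
  have "closed_span p S \<subseteq> {x \<in> lp p. T x \<in> closed_span p (T ` S)}"
    by (intro span_least preimage_cs[OF p T] span_cs[OF p TS]) (use S span_sup in blast)
  thus ?thesis by blast
qed

lemma img_span_eq:
  assumes p: "0 < p" and TR: "inv_pair p T R" and S: "S \<subseteq> lp p"
  shows "T ` closed_span p S = closed_span p (T ` S)"
proof
  show "T ` closed_span p S \<subseteq> closed_span p (T ` S)" by (rule img_span[OF p TR S])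
  have R: "bounded_op p R" and T: "bounded_op p T" using TR unfolding inv_pair_def by blast+
  have TS: "T ` S \<subseteq> lp p" using bounded_op_lp[OF T] by blast
  have "R ` closed_span p (T ` S) \<subseteq> closed_span p (R ` T ` S)"
    by (rule img_span[OF p inv_pair_sym[OF TR] TS])
  also have "R ` T ` S = S" by (rule inv_pair_img[OF TR S])
  finally have "T ` R ` closed_span p (T ` S) \<subseteq> T ` closed_span p S" by blast
  also have "T ` R ` closed_span p (T ` S) = closed_span p (T ` S)"
    by (rule inv_pair_img[OF inv_pair_sym[OF TR] cs_sub[OF span_cs[OF p TS]]])
  finally show "closed_span p (T ` S) \<subseteq> T ` closed_span p S" .
qed

lemma bij_shift: "bij_betw (\<lambda>j::int. j - k) UNIV UNIV"
  by (rule bij_betw_byWitness[where f'="\<lambda>j. j + k"]) auto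

lemma shift_lp: "x \<in> lp p \<Longrightarrow> (\<lambda>j. x (j - k)) \<in> lp p"
  unfolding lp_def using summable_on_reindex_bij_betw[OF bij_shift[of k], of "\<lambda>j. norm (x j) powr p"]
  by simp

lemma shift_norm: "lp_norm p (\<lambda>j. x (j - k)) = lp_norm p x"
  unfolding lp_norm_def using infsum_reindex_bij_betw[OF bij_shift[of k], of "\<lambda>j. norm (x j) powr p"]
  by simp

lemma shift_bounded: assumes p: "0 < p" shows "bounded_op p (shift_pow p k)"
  unfolding bounded_op_def shift_pow_def
  by (auto simp: shift_lp lp_add[OF p] lp_scal shift_norm intro!: exI[of _ 1])

lemma shift_zero[simp]: "shift_pow p k zero_seq = zero_seq"
  by (simp add: shift_pow_def zero_seq_def)

lemma shift_comp: "shift_pow p a \<circ> shift_pow p b = shift_pow p (a + b)"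
proof
  fix x show "(shift_pow p a \<circ> shift_pow p b) x = shift_pow p (a + b) x"
  proof (cases "x \<in> lp p")
    case True thus ?thesis by (simp add: shift_pow_def shift_lp algebra_simps)
  next
    case False
    hence "shift_pow p b x = zero_seq" "shift_pow p (a+b) x = zero_seq" by (simp_all add: shift_pow_def)
    thus ?thesis by simp
  qed
qed

lemma shift_0: "shift_pow p 0 = lp_id p"
  by (auto simp: shift_pow_def lp_id_def)

lemma shift_inv_pair: "0 < p \<Longrightarrow> inv_pair p (shift_pow p k) (shift_pow p (-k))"
  unfolding inv_pair_def using shift_bounded shift_comp[of p k "-k"] shift_comp[of p "-k" k] shift_0
  by simp

lemma shift_basis: "shift_pow p m (std_basis j) = std_basis (j + m)"
  unfolding shift_pow_def using std_basis_lp[of j p] by (simp add: std_basis_def fun_eq_iff eq_diff_eq)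

lemma shift_basis_set: "shift_pow p m ` {std_basis j | j. j \<le> k} = {std_basis j | j. j \<le> k + m}"
proof -
  have "shift_pow p m ` {std_basis j | j. j \<le> k} = {std_basis (j + m) | j. j \<le> k}"
  proof safe
    fix j :: int assume "j \<le> k"
    thus "std_basis (j + m) \<in> shift_pow p m ` {std_basis j | j. j \<le> k}"
      by (intro image_eqI[where x="std_basis j" and f="shift_pow p m", OF shift_basis[of p m j, symmetric]]) auto
  qed (auto simp: shift_basis)
  also have "\<dots> = {std_basis j | j. j \<le> k + m}"
  proof safe
    fix j :: int assume "j \<le> k + m" thus "\<exists>i. std_basis j = std_basis (i + m) \<and> i \<le> k"
      by (intro exI[of _ "j - m"]) auto
  qed auto
  finally show ?thesis .
qed

lemma basis_set_lp: "{std_basis j | j. j \<le> k} \<subseteq> lp p" by auto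

lemma shift_nest: "0 < p \<Longrightarrow> shift_pow p m ` nest_N p k = nest_N p (k + m)"
  unfolding nest_N_def img_span_eq[OF _ shift_inv_pair basis_set_lp] shift_basis_set ..

definition Zk :: "real \<Rightarrow> int \<Rightarrow> seq set" where
  "Zk p k = {x \<in> lp p. \<forall>j>k. x j = 0}"

lemma Zk_cs: assumes p: "0 < p" shows "closed_subspace p (Zk p k)"
  unfolding closed_subspace_def Zk_def
proof (intro conjI)
  show "\<forall>u x. (\<forall>n. u n \<in> {x \<in> lp p. \<forall>j>k. x j = 0}) \<and> x \<in> lp p \<and> (\<lambda>n. lp_norm p (\<lambda>j. u n j - x j)) \<longlonglongrightarrow> 0 \<longrightarrow>
          x \<in> {x \<in> lp p. \<forall>j>k. x j = 0}"
  proof (intro allI impI)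
    fix u x assume h: "(\<forall>n. u n \<in> {x \<in> lp p. \<forall>j>k. x j = 0}) \<and> x \<in> lp p \<and> (\<lambda>n. lp_norm p (\<lambda>j. u n j - x j)) \<longlonglongrightarrow> 0"
    hence u: "\<And>n. u n \<in> lp p" "\<And>n j. j > k \<Longrightarrow> u n j = 0" and x: "x \<in> lp p"
      and lim: "(\<lambda>n. lp_norm p (\<lambda>j. u n j - x j)) \<longlonglongrightarrow> 0" by auto
    have "x j = 0" if j: "j > k" for j
    proof -
      have "norm (x j) \<le> lp_norm p (\<lambda>j. u n j - x j)" for n
        using norm_le_lp_norm[OF p lp_diff[OF p u(1) x], of n j] u(2)[OF j, of n] by simp
      hence "norm (x j) \<le> 0" by (intro LIMSEQ_le_const[OF lim]) auto
      thus ?thesis by simp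
    qed
    thus "x \<in> {x \<in> lp p. \<forall>j>k. x j = 0}" using x by blast
  qed
qed (auto simp: zero_seq_def lp_add[OF p] lp_scal zero_lp[unfolded zero_seq_def])

lemma nest_cs: "0 < p \<Longrightarrow> closed_subspace p (nest_N p k)"
  unfolding nest_N_def by (rule span_cs[OF _ basis_set_lp])

lemma nest_sub: "0 < p \<Longrightarrow> nest_N p k \<subseteq> lp p"
  by (rule cs_sub[OF nest_cs])

lemma nest_Zk: "0 < p \<Longrightarrow> nest_N p k \<subseteq> Zk p k"
  unfolding nest_N_def
proof (rule span_least[OF Zk_cs], assumption, safe)
  fix j :: int assume j: "j \<le> k"
  show "std_basis j \<in> Zk p k" using std_basis_lp[of j p] j unfolding Zk_def by (simp add: std_basis_def)
qed

lemma basis_in_nest: "std_basis j \<in> nest_N p k \<longleftrightarrow> j \<le> k" if p: "0 < p"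
proof
  assume "std_basis j \<in> nest_N p k"
  hence "std_basis j \<in> Zk p k" using nest_Zk[OF p] by blast
  hence z: "\<forall>i>k. std_basis j i = 0" by (simp add: Zk_def)
  show "j \<le> k"
  proof (rule ccontr)
    assume "\<not> j \<le> k" hence "std_basis j j = 0" using z by simp
    thus False by (simp add: std_basis_def)
  qed
next
  assume "j \<le> k" thus "std_basis j \<in> nest_N p k"
    unfolding nest_N_def by (intro subsetD[OF span_sup]) blast
qed

lemma nest_mono: "k \<le> l \<Longrightarrow> nest_N p k \<subseteq> nest_N p l"
  unfolding nest_N_def by (rule cspan_mono) auto

lemma nest_le_iff: "0 < p \<Longrightarrow> nest_N p k \<subseteq> nest_N p l \<longleftrightarrow> k \<le> l"
proof
  assume p: "0 < p" and "nest_N p k \<subseteq> nest_N p l"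
  thus "k \<le> l" using basis_in_nest[OF p, of k k] basis_in_nest[OF p, of k l] by blast
qed (rule nest_mono)

lemma nest_inj: "0 < p \<Longrightarrow> nest_N p k = nest_N p l \<longleftrightarrow> k = l"
proof
  assume p: "0 < p" and "nest_N p k = nest_N p l"
  thus "k = l" using nest_le_iff[OF p, of k l] nest_le_iff[OF p, of l k] by simp
qed simp

lemma basis_ne_zero: "std_basis j \<noteq> zero_seq"
proof
  assume "std_basis j = zero_seq"
  hence "std_basis j j = zero_seq j" by simp
  thus False by (simp add: std_basis_def zero_seq_def)
qed

lemma nest_ne_zero: assumes p: "0 < p" shows "nest_N p k \<noteq> {zero_seq}"
proof
  assume "nest_N p k = {zero_seq}"
  moreover have "std_basis k \<in> nest_N p k" using basis_in_nest[OF p, of k k] by simp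
  ultimately show False using basis_ne_zero[of k] by simp
qed

lemma nest_ne_lp: assumes p: "0 < p" shows "nest_N p k \<noteq> lp p"
proof
  assume "nest_N p k = lp p"
  moreover have "std_basis (k+1) \<notin> nest_N p k" using basis_in_nest[OF p, of "k+1" k] by simp
  ultimately show False using std_basis_lp[of "k+1" p] by simp
qed

lemma nestN_cases: "M \<in> nestN p \<Longrightarrow> (\<exists>k. M = nest_N p k) \<or> M = {zero_seq} \<or> M = lp p"
  unfolding nestN_def by blast

lemma nestN_sub: assumes p: "0 < p" and M: "M \<in> nestN p" shows "M \<subseteq> lp p"
  using nestN_cases[OF M] nest_sub[OF p] zero_lp by blast

lemma nestN_shift: assumes p: "0 < p" and M: "M \<in> nestN p" shows "shift_pow p m ` M \<in> nestN p"
proof -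
  have "shift_pow p m ` lp p = lp p"
  proof
    show "shift_pow p m ` lp p \<subseteq> lp p" using bounded_op_lp[OF shift_bounded[OF p]] by blast
    show "lp p \<subseteq> shift_pow p m ` lp p"
    proof
      fix x assume x: "x \<in> lp p"
      have "x = shift_pow p m (shift_pow p (-m) x)"
        using inv_pair_app[OF shift_inv_pair[OF p, of "-m"] x] by simp
      thus "x \<in> shift_pow p m ` lp p" using bounded_op_lp[OF shift_bounded[OF p]] by blast
    qed
  qed
  moreover have "shift_pow p m ` {zero_seq} = {zero_seq}" by simp
  moreover have "shift_pow p m ` nest_N p k \<in> nestN p" for k
    unfolding shift_nest[OF p] nestN_def by blast
  moreover have "{zero_seq} \<in> nestN p" "lp p \<in> nestN p" unfolding nestN_def by blast+
  ultimately show ?thesis using nestN_cases[OF M] by metis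
qed

lemma comp_lp_id:
  assumes T: "bounded_op p T" shows "lp_id p \<circ> T = T" "T \<circ> lp_id p = T"
proof -
  show "lp_id p \<circ> T = T"
    by (rule ext) (simp add: lp_id_def bounded_op_lp[OF T])
  show "T \<circ> lp_id p = T"
  proof (rule ext)
    fix x show "(T \<circ> lp_id p) x = T x"
    proof (cases "x \<in> lp p")
      case False
      hence "T x = zero_seq" using T unfolding bounded_op_def by blast
      thus ?thesis using False bounded_op_zero[OF T] by (simp add: lp_id_def)
    qed (simp add: lp_id_def)
  qed
qed

lemma inv_pair_comp:
  assumes TR: "inv_pair p T R" and TR': "inv_pair p T' R'"
  shows "inv_pair p (T \<circ> T') (R' \<circ> R)"
proof -
  have b: "bounded_op p T" "bounded_op p R" "bounded_op p T'" "bounded_op p R'"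
    and e: "R \<circ> T = lp_id p" "T \<circ> R = lp_id p" "R' \<circ> T' = lp_id p" "T' \<circ> R' = lp_id p"
    using TR TR' unfolding inv_pair_def by blast+
  have "(R' \<circ> R) \<circ> (T \<circ> T') = R' \<circ> (R \<circ> T) \<circ> T'" by (simp add: o_assoc)
  also have "\<dots> = lp_id p" using e(1,3) comp_lp_id(2)[OF b(4)] by simp
  finally have 1: "(R' \<circ> R) \<circ> (T \<circ> T') = lp_id p" .
  have "(T \<circ> T') \<circ> (R' \<circ> R) = T \<circ> (T' \<circ> R') \<circ> R" by (simp add: o_assoc)
  also have "\<dots> = lp_id p" using e(2,4) comp_lp_id(2)[OF b(1)] by simp
  finally have 2: "(T \<circ> T') \<circ> (R' \<circ> R) = lp_id p" .
  show ?thesis unfolding inv_pair_def using 1 2 b bounded_op_comp by blast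
qed

lemma grp_fix:
  assumes p: "0 < p" and A: "A \<in> Grp p (Alg p (nestN p))"
  obtains R where "inv_pair p A R" "\<And>M. M \<in> nestN p \<Longrightarrow> A ` M = M" "\<And>M. M \<in> nestN p \<Longrightarrow> R ` M = M"
proof -
  obtain R where R: "bounded_op p R" "\<forall>M\<in>nestN p. R ` M \<subseteq> M" "R \<circ> A = lp_id p" "A \<circ> R = lp_id p"
    and Ab: "bounded_op p A" "\<forall>M\<in>nestN p. A ` M \<subseteq> M"
    using A unfolding Grp_def Alg_def by blast
  have AR: "inv_pair p A R" unfolding inv_pair_def using R Ab by blast
  show ?thesis
  proof (rule that[OF AR])
    fix M assume M: "M \<in> nestN p"
    have sub: "M \<subseteq> lp p" by (rule nestN_sub[OF p M])
    have "M = A ` R ` M" using inv_pair_img[OF inv_pair_sym[OF AR] sub] by simp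
    also have "\<dots> \<subseteq> A ` M" using R(2) M by blast
    finally show "A ` M = M" using Ab(2) M by blast
    have "M = R ` A ` M" using inv_pair_img[OF AR sub] by simp
    also have "\<dots> \<subseteq> R ` M" using Ab(2) M by blast
    finally show "R ` M = M" using R(2) M by blast
  qed
qed

lemma col_sup:
  assumes p: "0 < p" and A: "A \<in> Grp p (Alg p (nestN p))"
  shows "A \<circ> shift_pow p m \<in> Col p (nestN p)"
proof -
  obtain R where AR: "inv_pair p A R" and fixA: "\<And>M. M \<in> nestN p \<Longrightarrow> A ` M = M"
    and fixR: "\<And>M. M \<in> nestN p \<Longrightarrow> R ` M = M"
    using grp_fix[OF p A] by blast
  have ip: "inv_pair p (A \<circ> shift_pow p m) (shift_pow p (-m) \<circ> R)"
    by (rule inv_pair_comp[OF AR shift_inv_pair[OF p]])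
  hence inv: "invertible_op p (A \<circ> shift_pow p m)"
    unfolding invertible_op_def inv_pair_def by blast
  have "M \<in> nestN p \<longleftrightarrow> (A \<circ> shift_pow p m) ` M \<in> nestN p" if M: "closed_subspace p M" for M
  proof
    assume "M \<in> nestN p"
    hence "shift_pow p m ` M \<in> nestN p" by (rule nestN_shift[OF p])
    moreover have "(A \<circ> shift_pow p m) ` M = A ` (shift_pow p m ` M)" by (rule image_comp[symmetric])
    ultimately show "(A \<circ> shift_pow p m) ` M \<in> nestN p" using fixA by metis
  next
    assume K: "(A \<circ> shift_pow p m) ` M \<in> nestN p"
    have sub: "M \<subseteq> lp p" by (rule cs_sub[OF M])
    have "(shift_pow p (-m) \<circ> R) ` (A \<circ> shift_pow p m) ` M = M"
      by (rule inv_pair_img[OF ip sub])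
    hence "M = shift_pow p (-m) ` R ` (A \<circ> shift_pow p m) ` M" by (simp add: image_comp)
    also have "\<dots> = shift_pow p (-m) ` (A \<circ> shift_pow p m) ` M" using fixR[OF K] by simp
    finally have "M = shift_pow p (-m) ` (A \<circ> shift_pow p m) ` M" .
    thus "M \<in> nestN p" using nestN_shift[OF p K, of "-m"] by metis
  qed
  thus ?thesis unfolding Col_def using inv by blast
qed

lemma col_sub:
  assumes p: "0 < p" and S: "S \<in> Col p (nestN p)"
  shows "\<exists>A T. S = A \<circ> T \<and> A \<in> Grp p (Alg p (nestN p)) \<and> T \<in> Orb p"
proof -
  obtain R where SR: "inv_pair p S R"
    using S unfolding Col_def invertible_op_def inv_pair_def by blast
  have Sb: "bounded_op p S" and Rb: "bounded_op p R" using SR unfolding inv_pair_def by blast+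
  have colS: "\<And>M. closed_subspace p M \<Longrightarrow> M \<in> nestN p \<longleftrightarrow> S ` M \<in> nestN p"
    using S unfolding Col_def by blast
  have SRapp: "\<And>y. y \<in> lp p \<Longrightarrow> S (R y) = y" by (rule inv_pair_app[OF inv_pair_sym[OF SR]])
  have RSapp: "\<And>y. y \<in> lp p \<Longrightarrow> R (S y) = y" by (rule inv_pair_app[OF SR])
  have inN: "nest_N p k \<in> nestN p" for k unfolding nestN_def by blast
  have Slp: "S ` lp p = lp p"
  proof
    show "S ` lp p \<subseteq> lp p" using bounded_op_lp[OF Sb] by blast
    show "lp p \<subseteq> S ` lp p"
    proof
      fix y assume y: "y \<in> lp p"
      have "y = S (R y)" using SRapp[OF y] by simp
      thus "y \<in> S ` lp p" using bounded_op_lp[OF Rb] by blast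
    qed
  qed
  have "\<exists>j. S ` nest_N p k = nest_N p j" for k
  proof -
    have mem: "S ` nest_N p k \<in> nestN p" using colS[OF nest_cs[OF p]] inN by blast
    have ek: "std_basis k \<in> nest_N p k" using basis_in_nest[OF p, of k k] by simp
    have ne1: "S ` nest_N p k \<noteq> {zero_seq}"
    proof
      assume "S ` nest_N p k = {zero_seq}"
      hence "S (std_basis k) = zero_seq" using ek by blast
      hence "R (S (std_basis k)) = zero_seq" using bounded_op_zero[OF Rb] by simp
      thus False using RSapp[OF std_basis_lp[of k p]] basis_ne_zero[of k] by simp
    qed
    have ne2: "S ` nest_N p k \<noteq> lp p"
    proof
      assume h: "S ` nest_N p k = lp p"
      have "S (std_basis (k+1)) \<in> lp p" by (rule bounded_op_lp[OF Sb])
      hence "S (std_basis (k+1)) \<in> S ` nest_N p k" by (simp only: h)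
      then obtain y where y0: "S (std_basis (k+1)) = S y" and y1: "y \<in> nest_N p k" by (rule imageE)
      have y: "y \<in> nest_N p k" "S y = S (std_basis (k+1))" using y0 y1 by simp_all
      have "y \<in> lp p" using y(1) nest_sub[OF p] by blast
      hence "y = R (S y)" using RSapp by simp
      also have "\<dots> = std_basis (k+1)" using y(2) RSapp[OF std_basis_lp[of "k+1" p]] by simp
      finally have "y = std_basis (k+1)" .
      thus False using y(1) basis_in_nest[OF p, of "k+1" k] by simp
    qed
    from nestN_cases[OF mem] show ?thesis
    proof (elim disjE)
      assume "S ` nest_N p k = {zero_seq}" thus ?thesis using ne1 by simp
    next
      assume "S ` nest_N p k = lp p" thus ?thesis using ne2 by simp
    qed
  qed
  hence "\<forall>k. \<exists>j. S ` nest_N p k = nest_N p j" by blast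
  from choice[OF this] obtain \<phi> where phi0: "\<forall>k. S ` nest_N p k = nest_N p (\<phi> k)" by blast
  have phi: "\<And>k. S ` nest_N p k = nest_N p (\<phi> k)" using phi0 by blast
  have surj: "\<exists>k. \<phi> k = j" for j
  proof -
    define M where "M = {x \<in> lp p. S x \<in> nest_N p j}"
    have Mcs: "closed_subspace p M" unfolding M_def by (rule preimage_cs[OF p Sb nest_cs[OF p]])
    have SM: "S ` M = nest_N p j"
    proof
      show "S ` M \<subseteq> nest_N p j" unfolding M_def by blast
      show "nest_N p j \<subseteq> S ` M"
      proof
        fix y assume y: "y \<in> nest_N p j"
        hence yl: "y \<in> lp p" using nest_sub[OF p] by blast
        have "S (R y) \<in> nest_N p j" using y by (simp only: SRapp[OF yl])
        hence "R y \<in> M" unfolding M_def using bounded_op_lp[OF Rb, of y] by (intro CollectI conjI)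
        thus "y \<in> S ` M" by (rule image_eqI[where f=S and x="R y", OF SRapp[OF yl, symmetric]])
      qed
    qed
    have Mn: "M \<in> nestN p" using colS[OF Mcs] SM inN by simp
    have "M \<noteq> {zero_seq}"
    proof
      assume "M = {zero_seq}"
      hence "nest_N p j = S ` {zero_seq}" using SM by simp
      hence "nest_N p j = {zero_seq}" using bounded_op_zero[OF Sb] by simp
      thus False using nest_ne_zero[OF p] by blast
    qed
    moreover have "M \<noteq> lp p"
    proof
      assume "M = lp p"
      hence "nest_N p j = lp p" using SM Slp by simp
      thus False using nest_ne_lp[OF p] by blast
    qed
    ultimately obtain k where "M = nest_N p k" using nestN_cases[OF Mn] by blast
    hence "nest_N p (\<phi> k) = nest_N p j" using SM phi by simp
    thus ?thesis using nest_inj[OF p] by blast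
  qed
  have mono: "\<phi> k \<le> \<phi> l" if "k \<le> l" for k l
  proof -
    have "S ` nest_N p k \<subseteq> S ` nest_N p l" using nest_mono[OF that] by blast
    thus ?thesis using phi nest_le_iff[OF p] by simp
  qed
  have inj: "k = l" if "\<phi> k = \<phi> l" for k l
  proof -
    have "R ` S ` nest_N p k = R ` S ` nest_N p l" using phi that by simp
    hence "nest_N p k = nest_N p l" using inv_pair_img[OF SR nest_sub[OF p]] by simp
    thus ?thesis using nest_inj[OF p] by blast
  qed
  have strict: "\<phi> k < \<phi> l" if "k < l" for k l
  proof -
    have "\<phi> k \<le> \<phi> l" using that mono by simp
    moreover have "\<phi> k \<noteq> \<phi> l" using inj that by blast
    ultimately show ?thesis by simp
  qed
  have rev: "k < l" if "\<phi> k < \<phi> l" for k l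
  proof (rule ccontr)
    assume "\<not> k < l" hence "\<phi> l \<le> \<phi> k" using mono[of l k] by simp
    thus False using that by simp
  qed
  have step: "\<phi> (i + 1) = \<phi> i + 1" for i
  proof (rule ccontr)
    assume ne: "\<phi> (i + 1) \<noteq> \<phi> i + 1"
    have "\<phi> i < \<phi> (i+1)" by (rule strict) simp
    hence gt: "\<phi> i + 1 < \<phi> (i+1)" using ne by simp
    obtain l where l: "\<phi> l = \<phi> i + 1" using surj by blast
    have "i < l" using rev[of i l] l by simp
    moreover have "l < i + 1" using rev[of l "i+1"] l gt by simp
    ultimately show False by simp
  qed
  define m where "m = \<phi> 0"
  have phik: "\<phi> k = k + m" for k
  proof (induction k rule: int_induct[where k=0])
    case base show ?case by (simp add: m_def)
  next
    case (step1 i) thus ?case using step[of i] by simp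
  next
    case (step2 i) thus ?case using step[of "i - 1"] by simp
  qed
  define A where "A = S \<circ> shift_pow p (-m)"
  define R' where "R' = shift_pow p m \<circ> R"
  have AR': "inv_pair p A R'"
    using inv_pair_comp[OF SR shift_inv_pair[OF p, of "-m"]] unfolding A_def R'_def by simp
  have Ab: "bounded_op p A" and R'b: "bounded_op p R'" and e: "R' \<circ> A = lp_id p" "A \<circ> R' = lp_id p"
    using AR' unfolding inv_pair_def by blast+
  have AN: "A ` nest_N p k = nest_N p k" for k
  proof -
    have "A ` nest_N p k = S ` shift_pow p (-m) ` nest_N p k" unfolding A_def by (simp add: image_comp)
    also have "\<dots> = S ` nest_N p (k + - m)" using shift_nest[OF p] by simp
    also have "\<dots> = nest_N p k" using phi phik by simp
    finally show ?thesis .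
  qed
  have RN: "R ` nest_N p k = nest_N p (k - m)" for k
  proof -
    have "nest_N p k = S ` nest_N p (k - m)" using phi phik by simp
    hence "R ` nest_N p k = R ` S ` nest_N p (k - m)" by simp
    also have "\<dots> = nest_N p (k - m)" by (rule inv_pair_img[OF SR nest_sub[OF p]])
    finally show ?thesis .
  qed
  have R'N: "R' ` nest_N p k = nest_N p k" for k
  proof -
    have "R' ` nest_N p k = shift_pow p m ` R ` nest_N p k" unfolding R'_def by (simp add: image_comp)
    also have "\<dots> = nest_N p k" using RN shift_nest[OF p] by simp
    finally show ?thesis .
  qed
  have inv_alg: "T ` M \<subseteq> M" if T: "bounded_op p T" and TN: "\<And>k. T ` nest_N p k = nest_N p k"
    and M: "M \<in> nestN p" for T M
  proof -
    consider (N) k where "M = nest_N p k" | (Z) "M = {zero_seq}" | (L) "M = lp p"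
      using nestN_cases[OF M] by blast
    thus ?thesis
    proof cases
      case N thus ?thesis using TN[of k] by simp
    next
      case Z thus ?thesis using bounded_op_zero[OF T] by simp
    next
      case L thus ?thesis using bounded_op_lp[OF T] by blast
    qed
  qed
  have AAlg: "A \<in> Alg p (nestN p)" unfolding Alg_def using Ab inv_alg[OF Ab AN] by blast
  have R'Alg: "R' \<in> Alg p (nestN p)" unfolding Alg_def using R'b inv_alg[OF R'b R'N] by blast
  have AG: "A \<in> Grp p (Alg p (nestN p))" unfolding Grp_def using AAlg R'Alg R'b e by blast
  have "A \<circ> shift_pow p m = S \<circ> (shift_pow p (-m) \<circ> shift_pow p m)" unfolding A_def by (simp add: o_assoc)
  also have "\<dots> = S" using shift_comp[of p "-m" m] shift_0 comp_lp_id(2)[OF Sb] by simp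
  finally have "S = A \<circ> shift_pow p m" by simp
  thus ?thesis using AG unfolding Orb_def by blast
qed

theorem proposition5p5:
  fixes p :: real
  assumes "1 \<le> p"
  shows "Col p (nestN p) = {A \<circ> T | A T. A \<in> Grp p (Alg p (nestN p)) \<and> T \<in> Orb p}
       \<and> Grp p (Alg p (nestN p)) \<inter> Orb p = {lp_id p}"
proof
  have p: "0 < p" using assms by simp
  show "Col p (nestN p) = {A \<circ> T | A T. A \<in> Grp p (Alg p (nestN p)) \<and> T \<in> Orb p}"
  proof
    show "Col p (nestN p) \<subseteq> {A \<circ> T | A T. A \<in> Grp p (Alg p (nestN p)) \<and> T \<in> Orb p}"
    proof
      fix S assume "S \<in> Col p (nestN p)"
      then obtain A T where "S = A \<circ> T" "A \<in> Grp p (Alg p (nestN p))" "T \<in> Orb p"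
        using col_sub[OF p] by blast
      thus "S \<in> {A \<circ> T | A T. A \<in> Grp p (Alg p (nestN p)) \<and> T \<in> Orb p}" by blast
    qed
    show "{A \<circ> T | A T. A \<in> Grp p (Alg p (nestN p)) \<and> T \<in> Orb p} \<subseteq> Col p (nestN p)"
    proof
      fix X assume "X \<in> {A \<circ> T | A T. A \<in> Grp p (Alg p (nestN p)) \<and> T \<in> Orb p}"
      then obtain A T where X: "X = A \<circ> T" and A: "A \<in> Grp p (Alg p (nestN p))" and T: "T \<in> Orb p"
        by blast
      from T obtain m where "T = shift_pow p m" unfolding Orb_def by (rule rangeE)
      thus "X \<in> Col p (nestN p)" using col_sup[OF p A, of m] X by simp
    qed
  qed
  show "Grp p (Alg p (nestN p)) \<inter> Orb p = {lp_id p}"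
  proof
    show "Grp p (Alg p (nestN p)) \<inter> Orb p \<subseteq> {lp_id p}"
    proof
      fix A assume A: "A \<in> Grp p (Alg p (nestN p)) \<inter> Orb p"
      hence A1: "A \<in> Grp p (Alg p (nestN p))" and A2: "A \<in> Orb p" by simp_all
      from A2 obtain m where m: "A = shift_pow p m" unfolding Orb_def by (rule rangeE)
      obtain R where fx: "\<And>M. M \<in> nestN p \<Longrightarrow> A ` M = M"
        using grp_fix[OF p A1] by metis
      have "nest_N p 0 \<in> nestN p" unfolding nestN_def by (intro UnI1 rangeI)
      hence "A ` nest_N p 0 = nest_N p 0" by (rule fx)
      hence "nest_N p (0 + m) = nest_N p 0" using shift_nest[OF p, of m 0] m by simp
      hence "m = 0" using nest_inj[OF p] by simp
      thus "A \<in> {lp_id p}" using m shift_0 by simp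
    qed
    have idb: "bounded_op p (lp_id p)" by (rule lp_id_bounded[OF p])
    have idM: "lp_id p ` M \<subseteq> M" if "M \<in> nestN p" for M
      using nestN_sub[OF p that] by (auto simp: lp_id_def)
    have "lp_id p \<in> Alg p (nestN p)" unfolding Alg_def using idb idM by blast
    moreover have "lp_id p \<circ> lp_id p = lp_id p" by (rule comp_lp_id(1)[OF idb])
    ultimately have "lp_id p \<in> Grp p (Alg p (nestN p))" unfolding Grp_def using idb by blast
    moreover have "lp_id p \<in> Orb p" unfolding Orb_def shift_0[of p, symmetric] by (rule rangeI)
    ultimately show "{lp_id p} \<subseteq> Grp p (Alg p (nestN p)) \<inter> Orb p" by blast
  qed
qed

end
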